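(* Let $a:\mathcal H\to k$ be an infinitesimal character of $\mathcal H$, i.e. $a(xy)=a(x)\epsilon(y)+\epsilon(x)a(y)$ for all $x,y\in\mathcal H$. Then ${}^tL_a=(a\otimes\mathrm{Id})\circ\Phi$ is a biderivation of the Hopf algebra $\mathcal H_{CK}$: it is a derivation of the algebra $\mathcal H_{CK}$ and satisfies $\Delta_{CK}\circ{}^tL_a=({}^tL_a\otimes\mathrm{Id}+\mathrm{Id}\otimes{}^tL_a)\circ\Delta_{CK}$. Similarly, if $\varphi:\mathcal H\to k$ is a character (unital algebra morphism) of $\mathcal H$, then ${}^tL_\varphi=(\varphi\otimes\mathrm{Id})\circ\Phi$ is a Hopf algebra automorphism of $\mathcal H_{CK}$.
   Context: Let $k$ be a field of characteristic $0$. Rooted trees are finite and non-planar; $\bullet$ denotes the one-vertex tree. (1) $\mathcal H$ is the free commutative $k$-algebra generated by isomorphism classes of rooted trees with at least one edge, with unit identified with $\bullet$; its counit $\epsilon$ satisfies $\epsilon(\bullet)=1$ and vanishes on every tree with at least one edge. A subforest of a rooted tree $t$ is either the trivial subforest $\bullet$ or a nonempty set of pairwise vertex-disjoint subtrees of $t$ each with at least one edge, identified with the product of its components; $t/s$ is the tree obtained by contracting each component of $s$ to a vertex. The coproduct is multiplicative with $\Delta(t)=\sum_s s\otimes t/s$ over subforests of $t$ (as subsets). (2) $\mathcal H_{CK}$ is the Connes–Kreimer Hopf algebra: the free commutative $k$-algebra on isomorphism classes of nonempty rooted trees, unit the empty forest $\mathbf 1$, coproduct $\Delta_{CK}(u)=\sum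 v\otimes w$ over decompositions $U=V\sqcup W$ of the vertex set of the forest $u$ such that no vertex of $V$ lies strictly below a vertex of $W$ (in the order $x\le y$ iff the path from a root to $y$ passes through $x$), $v,w$ the induced forests. (3) $\Phi:\mathcal H_{CK}\to\mathcal H\otimes\mathcal H_{CK}$ is the algebra morphism with $\Phi(\mathbf 1)=\bullet\otimes\mathbf 1$ and $\Phi(t)=\sum_s s\otimes t/s$ for each nonempty tree $t$ (sum over subforests $s$ of $t$, $s\in\mathcal H$, $t/s\in\mathcal H_{CK}$). *)

theory Defs
  imports "HOL-Library.Multiset" "HOL-Library.Poly_Mapping" "HOL-Library.Product_Plus"
begin

text \<open>Finite non-planar rooted trees up to isomorphism: a vertex with a multiset of
  subtrees (its children). A forest (monomial) is a multiset of trees.\<close>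

datatype tree = Node (children: "tree multiset")

type_synonym forest = "tree multiset"

abbreviation dot :: tree where "dot \<equiv> Node {#}"

definition has_edge :: "tree \<Rightarrow> bool" where
  "has_edge t \<longleftrightarrow> t \<noteq> dot"

text \<open>the root component as an element of a forest in H: omitted if it is a single vertex\<close>
definition nt :: "tree \<Rightarrow> forest" where
  "nt t = (if has_edge t then {#t#} else {#})"

definition smult :: "'k::comm_semiring_1 \<Rightarrow> ('b \<Rightarrow>\<^sub>0 'k) \<Rightarrow> ('b \<Rightarrow>\<^sub>0 'k)" where
  "smult c p = Poly_Mapping.map (\<lambda>v. c * v) p"

definition lext :: "('b \<Rightarrow> ('c \<Rightarrow>\<^sub>0 'k::comm_semiring_1)) \<Rightarrow> ('b \<Rightarrow>\<^sub>0 'k) \<Rightarrow> ('c \<Rightarrow>\<^sub>0 'k)" where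
  "lext f x = (\<Sum>b\<in>Poly_Mapping.keys x. smult (Poly_Mapping.lookup x b) (f b))"

definition lfun :: "('b \<Rightarrow> 'k::comm_semiring_1) \<Rightarrow> ('b \<Rightarrow>\<^sub>0 'k) \<Rightarrow> 'k" where
  "lfun a x = (\<Sum>b\<in>Poly_Mapping.keys x. Poly_Mapping.lookup x b * a b)"

definition tensor :: "('b \<Rightarrow>\<^sub>0 'k::comm_semiring_1) \<Rightarrow> ('c \<Rightarrow>\<^sub>0 'k) \<Rightarrow> ('b \<times> 'c \<Rightarrow>\<^sub>0 'k)" where
  "tensor p q = (\<Sum>F\<in>Poly_Mapping.keys p. \<Sum>G\<in>Poly_Mapping.keys q. Poly_Mapping.single (F, G) (Poly_Mapping.lookup p F * Poly_Mapping.lookup q G))"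

definition tmap :: "(('b \<Rightarrow>\<^sub>0 'k::comm_semiring_1) \<Rightarrow> ('d \<Rightarrow>\<^sub>0 'k)) \<Rightarrow> (('c \<Rightarrow>\<^sub>0 'k) \<Rightarrow> ('e \<Rightarrow>\<^sub>0 'k))
    \<Rightarrow> ('b \<times> 'c \<Rightarrow>\<^sub>0 'k) \<Rightarrow> ('d \<times> 'e \<Rightarrow>\<^sub>0 'k)" where
  "tmap f g X = (\<Sum>p\<in>Poly_Mapping.keys X. smult (Poly_Mapping.lookup X p)
      (tensor (f (Poly_Mapping.single (fst p) 1)) (g (Poly_Mapping.single (snd p) 1))))"

definition of_nat_pm :: "('b \<Rightarrow>\<^sub>0 nat) \<Rightarrow> ('b \<Rightarrow>\<^sub>0 'k::comm_semiring_1)" where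
  "of_nat_pm p = Poly_Mapping.map of_nat p"

text \<open>Both H_CK and H are represented on the type forest =>0 k (free commutative
  algebra, monomials = forests, product = convolution, unit = empty forest).
  H_CK is the whole type; H is the subalgebra spanned by forests of trees with at least
  one edge, its unit (the empty monomial) being identified with the one-vertex tree.\<close>

definition Hset :: "(forest \<Rightarrow>\<^sub>0 'k::comm_ring_1) set" where
  "Hset = {x. \<forall>F\<in>Poly_Mapping.keys x. \<forall>t\<in>#F. has_edge t}"

text \<open>counit of H: epsilon(dot)=1, zero on trees with an edge, multiplicative;
  and counit of H_CK: epsilon(empty forest) = 1, zero on nonempty trees\<close>
definition epsH :: "(forest \<Rightarrow>\<^sub>0 'k::comm_ring_1) \<Rightarrow> 'k" where
  "epsH x = Poly_Mapping.lookup x {#}"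

definition epsCK :: "(forest \<Rightarrow>\<^sub>0 'k::comm_ring_1) \<Rightarrow> 'k" where
  "epsCK x = Poly_Mapping.lookup x {#}"

text \<open>cuts t: multiset (as nat-valued poly mapping) of pairs (V,W) of forests, over vertex
  decompositions of t with no vertex of V strictly below a vertex of W. Either the whole
  tree is in V, or the root is in W and each child subtree is decomposed recursively.\<close>

definition graft :: "(forest \<times> forest \<Rightarrow>\<^sub>0 nat) \<Rightarrow> (forest \<times> forest \<Rightarrow>\<^sub>0 nat)" where
  "graft X = (\<Sum>p\<in>Poly_Mapping.keys X. Poly_Mapping.single (fst p, {#Node (snd p)#}) (Poly_Mapping.lookup X p))"

primrec cuts :: "tree \<Rightarrow> (forest \<times> forest \<Rightarrow>\<^sub>0 nat)" where
  "cuts (Node M) = Poly_Mapping.single ({#Node M#}, {#}) 1 + graft (prod_mset (image_mset cuts M))"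

definition DeltaCK :: "(forest \<Rightarrow>\<^sub>0 'k::comm_ring_1) \<Rightarrow> (forest \<times> forest \<Rightarrow>\<^sub>0 'k)" where
  "DeltaCK x = lext (\<lambda>u. of_nat_pm (prod_mset (image_mset cuts u))) x"

text \<open>Subforests of t (sets of vertex-disjoint subtrees with at least one edge, or the trivial
  one) correspond bijectively to subsets of the edge set of t. phi t enumerates them,
  recording (F, R, Q): F the components not containing the root, R the component of the
  root (possibly the single vertex), Q the contracted tree t/s. For each child c of the
  root we either drop or keep the edge from the root to c.\<close>

type_synonym triple = "forest \<times> forest \<times> forest"

definition child_opts :: "(forest \<times> tree \<times> tree \<Rightarrow>\<^sub>0 nat) \<Rightarrow> (triple \<Rightarrow>\<^sub>0 nat)" where
  "child_opts P = (\<Sum>p\<in>Poly_Mapping.keys P. case p of (F, R, Q) \<Rightarrow>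
      Poly_Mapping.single (F + nt R, {#}, {#Q#}) (Poly_Mapping.lookup P p)
    + Poly_Mapping.single (F, {#R#}, children Q) (Poly_Mapping.lookup P p))"

definition close_root :: "(triple \<Rightarrow>\<^sub>0 nat) \<Rightarrow> (forest \<times> tree \<times> tree \<Rightarrow>\<^sub>0 nat)" where
  "close_root X = (\<Sum>p\<in>Poly_Mapping.keys X. case p of (F, RC, QC) \<Rightarrow>
      Poly_Mapping.single (F, Node RC, Node QC) (Poly_Mapping.lookup X p))"

primrec phi :: "tree \<Rightarrow> (forest \<times> tree \<times> tree \<Rightarrow>\<^sub>0 nat)" where
  "phi (Node M) = close_root (prod_mset (image_mset (\<lambda>c. child_opts c) (image_mset phi M)))"

text \<open>Phi(t) = sum over subforests s of s \<otimes> t/s, as element of H \<otimes> H_CK\<close>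
definition Phi_tree :: "tree \<Rightarrow> (forest \<times> forest \<Rightarrow>\<^sub>0 nat)" where
  "Phi_tree t = (\<Sum>p\<in>Poly_Mapping.keys (phi t). case p of (F, R, Q) \<Rightarrow>
      Poly_Mapping.single (F + nt R, {#Q#}) (Poly_Mapping.lookup (phi t) p))"

text \<open>Phi is the algebra morphism extending Phi_tree; Phi(1) = dot \<otimes> 1\<close>
definition Phi :: "(forest \<Rightarrow>\<^sub>0 'k::comm_ring_1) \<Rightarrow> (forest \<times> forest \<Rightarrow>\<^sub>0 'k)" where
  "Phi x = lext (\<lambda>u. of_nat_pm (prod_mset (image_mset Phi_tree u))) x"

definition left_apply :: "(forest \<Rightarrow> 'k::comm_ring_1) \<Rightarrow> (forest \<times> forest \<Rightarrow>\<^sub>0 'k) \<Rightarrow> (forest \<Rightarrow>\<^sub>0 'k)" where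
  "left_apply a X = (\<Sum>p\<in>Poly_Mapping.keys X. Poly_Mapping.single (snd p) (Poly_Mapping.lookup X p * a (fst p)))"

definition tL :: "(forest \<Rightarrow> 'k::comm_ring_1) \<Rightarrow> (forest \<Rightarrow>\<^sub>0 'k) \<Rightarrow> (forest \<Rightarrow>\<^sub>0 'k)" where
  "tL a x = left_apply a (Phi x)"

text \<open>A linear form on H is given by its values on the basis of forests of trees with an edge.\<close>
definition infinitesimal_character :: "(forest \<Rightarrow> 'k::comm_ring_1) \<Rightarrow> bool" where
  "infinitesimal_character a \<longleftrightarrow>
     (\<forall>x\<in>Hset. \<forall>y\<in>Hset. lfun a (x * y) = lfun a x * epsH y + epsH x * lfun a y)"

definition character :: "(forest \<Rightarrow> 'k::comm_ring_1) \<Rightarrow> bool" where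
  "character \<phi> \<longleftrightarrow> lfun \<phi> 1 = 1 \<and>
     (\<forall>x\<in>Hset. \<forall>y\<in>Hset. lfun \<phi> (x * y) = lfun \<phi> x * lfun \<phi> y)"

definition linear_map :: "((forest \<Rightarrow>\<^sub>0 'k::comm_ring_1) \<Rightarrow> (forest \<Rightarrow>\<^sub>0 'k)) \<Rightarrow> bool" where
  "linear_map D \<longleftrightarrow> (\<forall>x y. D (x + y) = D x + D y) \<and> (\<forall>c x. D (smult c x) = smult c (D x))"

definition biderivation :: "((forest \<Rightarrow>\<^sub>0 'k::comm_ring_1) \<Rightarrow> (forest \<Rightarrow>\<^sub>0 'k)) \<Rightarrow> bool" where
  "biderivation D \<longleftrightarrow> linear_map D
     \<and> (\<forall>x y. D (x * y) = D x * y + x * D y)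
     \<and> (\<forall>x. DeltaCK (D x) = tmap D id (DeltaCK x) + tmap id D (DeltaCK x))"

definition hopf_automorphism :: "((forest \<Rightarrow>\<^sub>0 'k::comm_ring_1) \<Rightarrow> (forest \<Rightarrow>\<^sub>0 'k)) \<Rightarrow> bool" where
  "hopf_automorphism L \<longleftrightarrow> linear_map L \<and> bij L
     \<and> L 1 = 1 \<and> (\<forall>x y. L (x * y) = L x * L y)
     \<and> (\<forall>x. DeltaCK (L x) = tmap L L (DeltaCK x))
     \<and> (\<forall>x. epsCK (L x) = epsCK x)"

end

theory Submission
  imports Defs
begin


section \<open>Generic linear algebra on poly mappings\<close>

abbreviation dl :: "'a \<Rightarrow> ('a \<Rightarrow>\<^sub>0 'k::comm_semiring_1)" where
  "dl a \<equiv> Poly_Mapping.single a 1"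

lemma smult_conv: "smult c P = Poly_Mapping.single 0 c * P"
  unfolding smult_def using mult_map_scale_conv_mult[of c P] by (simp add: fun_eq_iff)

lemma lookup_smult: "Poly_Mapping.lookup (smult c P) k = c * Poly_Mapping.lookup P k"
  unfolding smult_def by transfer (simp add: when_def)

lemma smult_add_left: "smult (a + b) P = smult a P + smult b P"
  by (rule poly_mapping_eqI) (simp add: lookup_smult lookup_add distrib_right)
lemma smult_add_right: "smult c (P + Q) = smult c P + smult c Q"
  by (rule poly_mapping_eqI) (simp add: lookup_smult lookup_add distrib_left)
lemma smult_0_left[simp]: "smult 0 P = 0"
  by (rule poly_mapping_eqI) (simp add: lookup_smult)
lemma smult_0_right[simp]: "smult c 0 = 0"
  by (rule poly_mapping_eqI) (simp add: lookup_smult)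
lemma smult_1[simp]: "smult 1 P = P"
  by (rule poly_mapping_eqI) (simp add: lookup_smult)
lemma smult_smult: "smult a (smult b P) = smult (a * b) P"
  by (rule poly_mapping_eqI) (simp add: lookup_smult mult.assoc)
lemma smult_commute: "smult a (smult b P) = smult b (smult a P)"
  by (simp add: smult_smult mult.commute)
lemma smult_single: "smult c (Poly_Mapping.single k v) = Poly_Mapping.single k (c * v)"
  by (rule poly_mapping_eqI) (simp add: lookup_smult lookup_single when_def)
lemma smult_mult_left: "smult c P * Q = smult c (P * Q)"
  by (simp add: smult_conv mult.assoc)
lemma smult_mult_right:
  fixes P Q :: "'a::comm_monoid_add \<Rightarrow>\<^sub>0 'k::comm_semiring_1"
  shows "P * smult c Q = smult c (P * Q)"
  by (simp add: smult_conv mult.left_commute)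
lemma smult_sum: "smult c (sum f A) = (\<Sum>x\<in>A. smult c (f x))"
  by (induction A rule: infinite_finite_induct) (simp_all add: smult_add_right)

lemma pm_expand: "(\<Sum>k\<in>Poly_Mapping.keys x. Poly_Mapping.single k (Poly_Mapping.lookup x k)) = x"
proof (rule poly_mapping_eqI)
  fix j
  show "Poly_Mapping.lookup (\<Sum>k\<in>Poly_Mapping.keys x. Poly_Mapping.single k (Poly_Mapping.lookup x k)) j = Poly_Mapping.lookup x j"
    by (simp add: lookup_sum lookup_single when_def in_keys_iff)
qed

lemma pm_induct[case_names zero single add]:
  fixes x :: "'a \<Rightarrow>\<^sub>0 'b::comm_monoid_add"
  assumes "P 0" "\<And>k c. P (Poly_Mapping.single k c)" "\<And>x y. P x \<Longrightarrow> P y \<Longrightarrow> P (x + y)"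
  shows "P x"
proof -
  have "P (\<Sum>k\<in>K. Poly_Mapping.single k (Poly_Mapping.lookup x k))" if "finite K" for K
    using that by (induction K rule: finite_induct) (auto intro: assms)
  then show ?thesis using pm_expand[of x] by (metis finite_keys)
qed

lemma lext_zero[simp]: "lext f 0 = 0"
  by (simp add: lext_def)

lemma lext_add: "lext f (X + Y) = lext f X + lext f Y"
  unfolding lext_def
  by (rule setsum_keys_plus_distrib) (simp_all add: lookup_add smult_add_left)

lemma lext_single: "lext f (Poly_Mapping.single p c) = smult c (f p)"
  by (cases "c = 0") (simp_all add: lext_def)

lemma lext_dl[simp]: "lext f (dl p) = f p"
  by (simp add: lext_single)

lemma lext_smult: "lext f (smult c X) = smult c (lext f X)"
  by (induction X rule: pm_induct) (simp_all add: smult_single lext_single smult_smult lext_add smult_add_right)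

lemma lext_sum: "lext f (sum g A) = (\<Sum>x\<in>A. lext f (g x))"
  by (induction A rule: infinite_finite_induct) (simp_all add: lext_add)

lemma lext_cong: "(\<And>p. p \<in> Poly_Mapping.keys X \<Longrightarrow> f p = g p) \<Longrightarrow> lext f X = lext g X"
  by (simp add: lext_def)

lemma lext_delta[simp]: "lext dl X = X"
  by (induction X rule: pm_induct) (simp_all add: lext_add lext_single smult_single)

lemma lext_plus_fun: "lext (\<lambda>p. f p + g p) X = lext f X + lext g X"
  by (induction X rule: pm_induct) (simp_all add: lext_add lext_single smult_add_right add_ac)

lemma lext_plus_cong: "(\<And>p. p \<in> Poly_Mapping.keys X \<Longrightarrow> h p = f p + g p) \<Longrightarrow> lext h X = lext f X + lext g X"
  using lext_cong[of X h "\<lambda>p. f p + g p"] lext_plus_fun by metis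

lemma lext_smult_fun: "lext (\<lambda>p. smult c (f p)) X = smult c (lext f X)"
  by (induction X rule: pm_induct) (simp_all add: lext_add lext_single smult_add_right smult_smult mult.commute)

lemma lext_zero_fun[simp]: "lext (\<lambda>p. 0) X = 0"
  by (induction X rule: pm_induct) (simp_all add: lext_add lext_single)

lemma lext_lext: "lext g (lext f X) = lext (\<lambda>p. lext g (f p)) X"
  by (induction X rule: pm_induct) (simp_all add: lext_add lext_single lext_smult)

lemma lext_mult_hom2:
  fixes A B :: "'a::comm_monoid_add \<Rightarrow>\<^sub>0 'k::comm_semiring_1"
    and g g1 g2 :: "'a \<Rightarrow> ('b::comm_monoid_add \<Rightarrow>\<^sub>0 'k)"
  assumes "\<And>a b. g (a + b) = g1 a * g2 b"
  shows "lext g (A * B) = lext g1 A * lext g2 B"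
proof (induction A rule: pm_induct)
  case zero then show ?case by simp
next
  case (single a c)
  show ?case
  proof (induction B rule: pm_induct)
    case zero then show ?case by simp
  next
    case (single b d)
    then show ?case by (simp add: mult_single lext_single assms smult_mult_left smult_mult_right smult_smult mult.commute)
  next
    case (add x y)
    then show ?case by (simp add: distrib_left lext_add)
  qed
next
  case (add x y)
  then show ?case by (simp add: distrib_right lext_add)
qed

lemma lext_mult_lext:
  fixes A :: "'a \<Rightarrow>\<^sub>0 'k::comm_semiring_1" and B :: "'c \<Rightarrow>\<^sub>0 'k"
    and g1 :: "'a \<Rightarrow> ('b::comm_monoid_add \<Rightarrow>\<^sub>0 'k)" and g2 :: "'c \<Rightarrow> ('b \<Rightarrow>\<^sub>0 'k)"
  shows "lext g1 A * lext g2 B = lext (\<lambda>a. lext (\<lambda>b. g1 a * g2 b) B) A"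
proof (induction A rule: pm_induct)
  case zero then show ?case by simp
next
  case (single a c)
  show ?case
  proof (induction B rule: pm_induct)
    case zero then show ?case by simp
  next
    case (single b d)
    then show ?case by (simp add: lext_single smult_mult_left smult_mult_right smult_smult mult.commute)
  next
    case (add x y)
    then show ?case by (simp add: distrib_left lext_add lext_plus_fun lext_single smult_add_right)
  qed
next
  case (add x y)
  then show ?case by (simp add: distrib_right lext_add)
qed

lemma lext_one:
  shows "lext g (1 :: 'a::zero \<Rightarrow>\<^sub>0 'k::comm_semiring_1) = g 0"
  using lext_single[of g 0 1] by simp

lemma lext_prod_mset:
  fixes g :: "'a::comm_monoid_add \<Rightarrow> ('b::comm_monoid_add \<Rightarrow>\<^sub>0 'k::comm_semiring_1)"
    and h :: "'c \<Rightarrow> ('a \<Rightarrow>\<^sub>0 'k)"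
  assumes "\<And>a b. g (a + b) = g a * g b" "g 0 = 1"
  shows "lext g (prod_mset (image_mset h M)) = prod_mset (image_mset (\<lambda>x. lext g (h x)) M)"
proof -
  have m: "lext g (A * B) = lext g A * lext g B" for A B
    by (rule lext_mult_hom2) (rule assms(1))
  show ?thesis by (induction M) (simp_all add: lext_one assms m)
qed

lemma keys_smult: "Poly_Mapping.keys (smult c P) \<subseteq> Poly_Mapping.keys P"
  by (auto simp: in_keys_iff lookup_smult)

lemma keys_lext: "Poly_Mapping.keys (lext f X) \<subseteq> (\<Union>p\<in>Poly_Mapping.keys X. Poly_Mapping.keys (f p))"
  unfolding lext_def using keys_sum keys_smult by fastforce



type_synonym 'a nm = "'a \<Rightarrow>\<^sub>0 nat"

abbreviation dn :: "'a \<Rightarrow> 'a nm" where "dn a \<equiv> Poly_Mapping.single a 1"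

lemma dn_mult: "dn a * dn b = dn (a + b)"
  by (simp add: mult_single)

definition CF :: "forest \<Rightarrow> (forest \<times> forest) nm" where
  "CF u = prod_mset (image_mset cuts u)"
definition PF :: "forest \<Rightarrow> (forest \<times> forest) nm" where
  "PF u = prod_mset (image_mset Phi_tree u)"
definition PO :: "forest \<Rightarrow> triple nm" where
  "PO u = prod_mset (image_mset (\<lambda>w. child_opts (phi w)) u)"

lemma CF_simps[simp]: "CF {#} = 1" "CF (u + v) = CF u * CF v" "CF {#t#} = cuts t" "CF (add_mset t u) = cuts t * CF u"
  by (simp_all add: CF_def)
lemma PF_simps[simp]: "PF {#} = 1" "PF (u + v) = PF u * PF v" "PF {#t#} = Phi_tree t" "PF (add_mset t u) = Phi_tree t * PF u"
  by (simp_all add: PF_def)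
lemma PO_simps[simp]: "PO {#} = 1" "PO (u + v) = PO u * PO v" "PO {#t#} = child_opts (phi t)"
  by (simp_all add: PO_def)

lemma sum_single_lext: "(\<Sum>p\<in>Poly_Mapping.keys X. Poly_Mapping.single (f p) (Poly_Mapping.lookup X p)) = lext (\<lambda>p. dn (f p)) X"
  unfolding lext_def by (rule sum.cong) (simp_all add: smult_single)

lemma graft_lext: "graft X = lext (\<lambda>(V,W). dn (V, {#Node W#})) X"
  unfolding graft_def sum_single_lext by (simp add: split_def)

lemma close_root_lext: "close_root X = lext (\<lambda>(F,RC,QC). dn (F, Node RC, Node QC)) X"
  unfolding close_root_def lext_def by (rule sum.cong) (auto simp: smult_single split: prod.split)

lemma child_opts_lext: "child_opts P = lext (\<lambda>(F,R,Q). dn (F + nt R, {#}, {#Q#}) + dn (F, {#R#}, children Q)) P"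
  unfolding child_opts_def lext_def by (rule sum.cong) (auto simp: smult_single smult_add_right split: prod.split)

lemma Phi_tree_lext: "Phi_tree t = lext (\<lambda>(F,R,Q). dn (F + nt R, {#Q#})) (phi t)"
  unfolding Phi_tree_def lext_def by (rule sum.cong) (auto simp: smult_single split: prod.split)

lemma cuts_alt: "cuts Q = dn ({#Q#},{#}) + lext (\<lambda>(V,W). dn (V, {#Node W#})) (CF (children Q))"
  by (cases Q) (simp add: CF_def graft_lext)

lemma phi_alt: "phi Q = lext (\<lambda>(F,RC,QC). dn (F, Node RC, Node QC)) (PO (children Q))"
  by (cases Q) (simp add: PO_def close_root_lext multiset.map_comp comp_def)

lemma one_quad[simp]: "Poly_Mapping.single (({#}::forest), ({#}::forest), ({#}::forest), ({#}::forest)) (Suc 0) = 1"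
proof -
  have "(({#}::forest), ({#}::forest), ({#}::forest), ({#}::forest)) = 0" by (simp add: zero_prod_def)
  then show ?thesis by (metis One_nat_def single_one)
qed
lemma one_forest[simp]: "Poly_Mapping.single ({#}::'a multiset) (Suc 0) = 1"
  by (metis One_nat_def single_one)
lemma one_trip[simp]: "Poly_Mapping.single (({#}::forest), ({#}::forest), ({#}::forest)) (Suc 0) = 1"
proof -
  have "(({#}::forest), ({#}::forest), ({#}::forest)) = 0" by (simp add: zero_prod_def)
  then show ?thesis by (metis One_nat_def single_one)
qed
lemma one_pair[simp]: "Poly_Mapping.single (({#}::forest), ({#}::forest)) (Suc 0) = 1"
proof -
  have "(({#}::forest), ({#}::forest)) = 0" by (simp add: zero_prod_def)
  then show ?thesis by (metis One_nat_def single_one)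
qed
lemma lext_dn_Suc[simp]: "lext f (Poly_Mapping.single p (Suc 0)) = f p"
  using lext_dl[of f p] by (metis One_nat_def)

lemma lext_dn_delta[simp]: "lext (\<lambda>a. Poly_Mapping.single a (Suc 0)) X = X"
  using lext_delta[of X] by (metis One_nat_def)

lemma dn_mult': "Poly_Mapping.single a (Suc 0) * Poly_Mapping.single b (Suc 0) = Poly_Mapping.single (a + b) (Suc 0)"
  by (simp add: mult_single)

lemma phi_Node: "phi (Node W) = lext (\<lambda>(F,RC,QC). dn (F, Node RC, Node QC)) (PO W)"
  using phi_alt[of "Node W"] by simp

lemma zero_trip: "((0::forest), (0::forest), (0::forest)) = 0"
  by (simp add: zero_prod_def)
lemma zero_quad: "((0::forest), (0::forest), (0::forest), (0::forest)) = 0"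
  by (simp add: zero_prod_def)
lemma zero_pair: "((0::forest), (0::forest)) = 0"
  by (simp add: zero_prod_def)

definition kap :: "forest \<times> forest \<times> forest \<times> forest \<Rightarrow> (forest \<times> tree \<times> forest \<times> forest) nm" where
  "kap = (\<lambda>(F,RC,V,W). dn (F, Node RC, V, W))"

definition psiB :: "triple \<Rightarrow> (forest \<times> forest \<times> forest \<times> forest) nm" where
  "psiB = (\<lambda>(F,RC,QC). lext (\<lambda>(V,W). dn (F,RC,V,W)) (CF QC))"

definition chiC :: "forest \<times> forest \<Rightarrow> (forest \<times> forest \<times> forest \<times> forest) nm" where
  "chiC = (\<lambda>(V,W). lext (\<lambda>(Fv,Qv). lext (\<lambda>(F',RC',QC'). dn (Fv+F',RC',Qv,QC')) (PO W)) (PF V))"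

definition Lt :: "tree \<Rightarrow> (forest \<times> tree \<times> forest \<times> forest) nm" where
  "Lt c = lext (\<lambda>(F,R,Q). lext (\<lambda>(V,W). dn (F,R,V,W)) (CF (children Q))) (phi c)"

definition Rt :: "tree \<Rightarrow> (forest \<times> tree \<times> forest \<times> forest) nm" where
  "Rt c = lext (\<lambda>(V,W). lext (\<lambda>(Fv,Qv). lext (\<lambda>(F',R',Q'). dn (Fv+F', R', Qv, children Q')) (phi (Node W))) (PF V)) (CF (children c))"

definition Bt :: "tree \<Rightarrow> (forest \<times> forest \<times> forest \<times> forest) nm" where
  "Bt c = lext psiB (child_opts (phi c))"

definition Ct :: "tree \<Rightarrow> (forest \<times> forest \<times> forest \<times> forest) nm" where
  "Ct c = lext chiC (cuts c)"

lemma psiB_mult: "psiB (x + y) = psiB x * psiB y"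
proof -
  obtain F1 R1 Q1 where x: "x = (F1,R1,Q1)" by (cases x) auto
  obtain F2 R2 Q2 where y: "y = (F2,R2,Q2)" by (cases y) auto
  show ?thesis unfolding x y psiB_def
    by (simp, rule lext_mult_hom2) (auto simp: mult_single)
qed

lemma psiB_0: "psiB 0 = 1"
  by (simp add: psiB_def zero_prod_def lext_one[simplified zero_prod_def])

lemma chiC_mult: "chiC (x + y) = chiC x * chiC y"
proof -
  obtain V1 W1 where x: "x = (V1,W1)" by (cases x) auto
  obtain V2 W2 where y: "y = (V2,W2)" by (cases y) auto
  show ?thesis unfolding x y chiC_def
    apply simp
    apply (rule lext_mult_hom2)
    apply (clarsimp split: prod.split)
    apply (rule lext_mult_hom2)
    apply (auto simp: mult_single add_ac)
    done
qed

lemma chiC_0: "chiC 0 = 1"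
  by (simp add: chiC_def zero_prod_def lext_one[simplified zero_prod_def])

lemma LB: "Lt (Node M) = lext kap (prod_mset (image_mset Bt M))"
proof -
  have "Lt (Node M) = lext (\<lambda>p. lext (\<lambda>(F,R,Q). lext (\<lambda>(V,W). dn (F,R,V,W)) (CF (children Q))) (case p of (F,RC,QC) \<Rightarrow> dn (F, Node RC, Node QC))) (PO M)"
    unfolding Lt_def phi_alt[of "Node M"] by (simp add: lext_lext)
  also have "\<dots> = lext (\<lambda>p. lext kap (psiB p)) (PO M)"
    by (rule lext_cong) (auto simp: psiB_def kap_def lext_lext split: prod.split intro!: lext_cong)
  also have "\<dots> = lext kap (lext psiB (PO M))" by (simp add: lext_lext)
  also have "lext psiB (PO M) = prod_mset (image_mset Bt M)"
    unfolding PO_def Bt_def by (simp add: lext_prod_mset psiB_mult psiB_0 multiset.map_comp comp_def)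
  finally show ?thesis .
qed

lemma RC: "Rt (Node M) = lext kap (prod_mset (image_mset Ct M))"
proof -
  have "Rt (Node M) = lext (\<lambda>p. lext kap (chiC p)) (CF M)"
    unfolding Rt_def tree.sel
    by (rule lext_cong) (auto simp: chiC_def kap_def lext_lext phi_Node simp del: phi.simps split: prod.split intro!: lext_cong)
  also have "\<dots> = lext kap (lext chiC (CF M))" by (simp add: lext_lext)
  also have "lext chiC (CF M) = prod_mset (image_mset Ct M)"
    unfolding CF_def Ct_def by (simp add: lext_prod_mset chiC_mult chiC_0)
  finally show ?thesis .
qed

definition mu1 :: "forest \<times> tree \<times> forest \<times> forest \<Rightarrow> (forest \<times> forest \<times> forest \<times> forest) nm" where
  "mu1 = (\<lambda>(F,R,V,W). dn (F + nt R, {#}, V, {#Node W#}))"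
definition mu2 :: "forest \<times> tree \<times> forest \<times> forest \<Rightarrow> (forest \<times> forest \<times> forest \<times> forest) nm" where
  "mu2 = (\<lambda>(F,R,V,W). dn (F, {#R#}, V, W))"
definition E1 :: "tree \<Rightarrow> (forest \<times> forest \<times> forest \<times> forest) nm" where
  "E1 c = lext (\<lambda>(F,R,Q). dn (F + nt R, {#}, {#Q#}, {#})) (phi c)"

lemma Bt_expand: "Bt c = E1 c + lext mu1 (Lt c) + lext mu2 (Lt c)"
proof -
  have "Bt c = lext (\<lambda>p. lext psiB (case p of (F,R,Q) \<Rightarrow> dn (F + nt R, {#}, {#Q#}) + dn (F, {#R#}, children Q))) (phi c)"
    unfolding Bt_def child_opts_lext lext_lext ..
  also have "\<dots> = lext (\<lambda>p. (case p of (F,R,Q) \<Rightarrow> dn (F + nt R, {#}, {#Q#}, {#}))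
      + (case p of (F,R,Q) \<Rightarrow> lext (\<lambda>(V,W). mu1 (F,R,V,W)) (CF (children Q)))
      + (case p of (F,R,Q) \<Rightarrow> lext (\<lambda>(V,W). mu2 (F,R,V,W)) (CF (children Q)))) (phi c)"
    by (rule lext_cong) (auto simp: lext_add psiB_def mu1_def mu2_def cuts_alt lext_lext split: prod.split intro!: lext_cong)
  also have "\<dots> = E1 c + lext mu1 (Lt c) + lext mu2 (Lt c)"
    unfolding E1_def Lt_def lext_lext lext_plus_fun
    by (intro arg_cong2[where f="(+)"] lext_cong refl) (auto simp: lext_lext split: prod.split intro!: lext_cong)
  finally show ?thesis .
qed

definition A1 :: "forest \<Rightarrow> forest \<Rightarrow> (forest \<times> forest \<times> forest \<times> forest) nm" where
  "A1 V W = lext (\<lambda>(Fv,Qv). lext (\<lambda>(F',R',Q'). mu1 (Fv+F',R',Qv,children Q')) (phi (Node W))) (PF V)"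
definition A2 :: "forest \<Rightarrow> forest \<Rightarrow> (forest \<times> forest \<times> forest \<times> forest) nm" where
  "A2 V W = lext (\<lambda>(Fv,Qv). lext (\<lambda>(F',R',Q'). mu2 (Fv+F',R',Qv,children Q')) (phi (Node W))) (PF V)"

lemma chiC_graft: "chiC (V, {#Node W#}) = A1 V W + A2 V W"
proof -
  have "chiC (V, {#Node W#}) = lext (\<lambda>(Fv,Qv). lext (\<lambda>(F',R',Q'). mu1 (Fv+F',R',Qv,children Q') + mu2 (Fv+F',R',Qv,children Q')) (phi (Node W))) (PF V)"
    unfolding chiC_def PO_simps child_opts_lext
    by (auto simp: child_opts_lext lext_lext lext_add mu1_def mu2_def add.assoc simp del: phi.simps split: prod.split intro!: lext_cong)
  also have "\<dots> = A1 V W + A2 V W"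
    unfolding A1_def A2_def
    by (rule lext_plus_cong) (auto split: prod.split intro!: lext_plus_cong)
  finally show ?thesis .
qed

lemma chiC_root: "chiC ({#c#}, {#}) = E1 c"
proof -
  have z: "lext g (1 :: triple nm) = g ({#},{#},{#})" for g :: "triple \<Rightarrow> (forest \<times> forest \<times> forest \<times> forest) nm"
    using lext_one[of g] by (simp add: zero_prod_def)
  show ?thesis
    unfolding chiC_def E1_def PF_simps PO_simps Phi_tree_lext
    by (auto simp: lext_lext z Phi_tree_lext split: prod.split intro!: lext_cong)
qed

lemma Ct_expand: "Ct c = E1 c + lext mu1 (Rt c) + lext mu2 (Rt c)"
proof -
  have "Ct c = E1 c + lext (\<lambda>(V,W). chiC (V, {#Node W#})) (CF (children c))"
    unfolding Ct_def cuts_alt[of c] lext_add lext_lext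
    by (simp add: chiC_root split_def)
  also have "lext (\<lambda>(V,W). chiC (V, {#Node W#})) (CF (children c)) = lext (\<lambda>(V,W). A1 V W) (CF (children c)) + lext (\<lambda>(V,W). A2 V W) (CF (children c))"
    by (rule lext_plus_cong) (auto simp: chiC_graft)
  also have "lext (\<lambda>(V,W). A1 V W) (CF (children c)) = lext mu1 (Rt c)"
    unfolding Rt_def A1_def lext_lext
    by (auto simp: lext_lext simp del: phi.simps split: prod.split intro!: lext_cong)
  also have "lext (\<lambda>(V,W). A2 V W) (CF (children c)) = lext mu2 (Rt c)"
    unfolding Rt_def A2_def lext_lext
    by (auto simp: lext_lext simp del: phi.simps split: prod.split intro!: lext_cong)
  finally show ?thesis by (simp add: add.assoc)
qed

lemma D: "Lt c = Rt c"
proof (induction c)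
  case (Node M)
  have "Bt c = Ct c" if "c \<in># M" for c
    using Node[OF that] by (simp add: Bt_expand Ct_expand)
  then have "image_mset Bt M = image_mset Ct M" by (rule image_mset_cong)
  then show ?case by (simp add: LB RC)
qed



definition lopf :: "forest \<times> forest \<Rightarrow> (forest \<times> forest \<times> forest) nm" where
  "lopf = (\<lambda>(S,Q). lext (\<lambda>(V,W). dn (S,V,W)) (CF Q))"
definition ropf :: "forest \<times> forest \<Rightarrow> (forest \<times> forest \<times> forest) nm" where
  "ropf = (\<lambda>(V,W). lext (\<lambda>(Fv,Qv). lext (\<lambda>(Fw,Qw). dn (Fv+Fw,Qv,Qw)) (PF W)) (PF V))"
definition nu :: "forest \<times> tree \<times> forest \<times> forest \<Rightarrow> (forest \<times> forest \<times> forest) nm" where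
  "nu = (\<lambda>(F,R,V,W). dn (F + nt R, V, {#Node W#}))"

lemma lopf_mult: "lopf (x + y) = lopf x * lopf y"
proof -
  obtain F1 R1 where x: "x = (F1,R1)" by (cases x) auto
  obtain F2 R2 where y: "y = (F2,R2)" by (cases y) auto
  show ?thesis unfolding x y lopf_def
    by (simp, rule lext_mult_hom2) (auto simp: mult_single)
qed

lemma lopf_0: "lopf 0 = 1"
  by (simp add: lopf_def zero_prod_def lext_one[simplified zero_prod_def])

lemma ropf_mult: "ropf (x + y) = ropf x * ropf y"
proof -
  obtain V1 W1 where x: "x = (V1,W1)" by (cases x) auto
  obtain V2 W2 where y: "y = (V2,W2)" by (cases y) auto
  show ?thesis unfolding x y ropf_def
    apply simp
    apply (rule lext_mult_hom2)
    apply (clarsimp split: prod.split)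
    apply (rule lext_mult_hom2)
    apply (auto simp: mult_single add_ac)
    done
qed

lemma ropf_0: "ropf 0 = 1"
  by (simp add: ropf_def zero_prod_def lext_one[simplified zero_prod_def])

definition T1 :: "tree \<Rightarrow> (forest \<times> forest \<times> forest) nm" where
  "T1 t = lext (\<lambda>(F,R,Q). dn (F + nt R, {#Q#}, {#})) (phi t)"

lemma lopf_tree: "lext lopf (Phi_tree t) = T1 t + lext nu (Lt t)"
proof -
  have "lext lopf (Phi_tree t) = lext (\<lambda>p. (case p of (F,R,Q) \<Rightarrow> dn (F + nt R, {#Q#}, {#}))
     + (case p of (F,R,Q) \<Rightarrow> lext (\<lambda>(V,W). nu (F,R,V,W)) (CF (children Q)))) (phi t)"
    unfolding Phi_tree_lext lext_lext
    by (rule lext_cong) (auto simp: lext_add lopf_def nu_def cuts_alt lext_lext split: prod.split intro!: lext_cong)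
  also have "\<dots> = T1 t + lext nu (Lt t)"
    unfolding T1_def Lt_def lext_lext lext_plus_fun
    by (intro arg_cong2[where f="(+)"] lext_cong refl) (auto simp: lext_lext split: prod.split intro!: lext_cong)
  finally show ?thesis .
qed

lemma ropf_tree: "lext ropf (cuts t) = T1 t + lext nu (Rt t)"
proof -
  have z: "lext g (1 :: (forest \<times> forest) nm) = g ({#},{#})" for g :: "forest \<times> forest \<Rightarrow> (forest \<times> forest \<times> forest) nm"
    using lext_one[of g] by (simp add: zero_prod_def)
  have r: "ropf ({#t#}, {#}) = T1 t"
    unfolding ropf_def T1_def
    by (auto simp: lext_lext z Phi_tree_lext split: prod.split intro!: lext_cong)
  have "lext ropf (cuts t) = T1 t + lext (\<lambda>(V,W). ropf (V, {#Node W#})) (CF (children t))"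
    unfolding cuts_alt[of t] lext_add lext_lext
    by (simp add: r split_def)
  also have "lext (\<lambda>(V,W). ropf (V, {#Node W#})) (CF (children t)) = lext nu (Rt t)"
    unfolding Rt_def ropf_def lext_lext
    by (auto simp: lext_lext Phi_tree_lext nu_def add.assoc simp del: phi.simps split: prod.split intro!: lext_cong)
  finally show ?thesis .
qed

lemma N1: "lext lopf (PF u) = lext ropf (CF u)"
proof -
  have "lext lopf (PF u) = prod_mset (image_mset (\<lambda>t. lext lopf (Phi_tree t)) u)"
    unfolding PF_def by (rule lext_prod_mset) (simp_all add: lopf_mult lopf_0)
  also have "\<dots> = prod_mset (image_mset (\<lambda>t. lext ropf (cuts t)) u)"
    by (simp add: lopf_tree ropf_tree D)
  also have "\<dots> = lext ropf (CF u)"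
    unfolding CF_def by (rule lext_prod_mset[symmetric]) (simp_all add: ropf_mult ropf_0)
  finally show ?thesis .
qed



section \<open>Counit property\<close>

lemma nt_empty_iff: "nt R = {#} \<longleftrightarrow> R = dot"
  by (simp add: nt_def has_edge_def)

lemma prod_dn_single: "prod_mset (image_mset (\<lambda>t. dn {#t#}) u) = dn u"
  by (induction u) (simp_all add: mult_single)

definition ecu :: "forest \<times> tree \<times> tree \<Rightarrow> forest nm" where
  "ecu = (\<lambda>(F,R,Q). if F = {#} \<and> R = dot then dn {#Q#} else 0)"
definition ecu' :: "triple \<Rightarrow> forest nm" where
  "ecu' = (\<lambda>(F,RC,QC). if F = {#} \<and> RC = {#} then dn QC else 0)"

lemma ecu'_mult: "ecu' (x + y) = ecu' x * ecu' y"
  by (cases x; cases y) (auto simp: ecu'_def mult_single)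

lemma ecu'_0: "ecu' 0 = 1"
  by (simp add: ecu'_def zero_prod_def)

lemma counit_phi: "lext ecu (phi t) = dn {#t#}"
proof (induction t)
  case (Node M)
  have co: "lext ecu' (child_opts (phi c)) = dn {#c#}" if "c \<in># M" for c
  proof -
    have "lext ecu' (child_opts (phi c)) = lext ecu (phi c)"
      unfolding child_opts_lext lext_lext
      by (rule lext_cong) (auto simp: ecu_def ecu'_def lext_add nt_empty_iff split: prod.split)
    then show ?thesis using Node[OF that] by simp
  qed
  have "lext ecu' (PO M) = prod_mset (image_mset (\<lambda>c. lext ecu' (child_opts (phi c))) M)"
    unfolding PO_def by (rule lext_prod_mset) (simp_all add: ecu'_mult ecu'_0)
  also have "\<dots> = prod_mset (image_mset (\<lambda>c. dn {#c#}) M)"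
    by (rule arg_cong[where f=prod_mset], rule image_mset_cong, rule co)
  also have "\<dots> = dn M" by (rule prod_dn_single)
  finally have pm: "lext ecu' (PO M) = dn M" .
  have "lext ecu (phi (Node M)) = lext (\<lambda>QC. dn {#Node QC#}) (lext ecu' (PO M))"
    unfolding phi_Node lext_lext
    by (rule lext_cong) (auto simp: ecu_def ecu'_def split: prod.split)
  then show ?case using pm by simp
qed

definition ecP :: "forest \<times> forest \<Rightarrow> forest nm" where
  "ecP = (\<lambda>(S,Q). if S = {#} then dn Q else 0)"

lemma ecP_mult: "ecP (x + y) = ecP x * ecP y"
  by (cases x; cases y) (auto simp: ecP_def mult_single)

lemma ecP_0: "ecP 0 = 1"
  by (simp add: ecP_def zero_prod_def)

lemma counit_PF: "lext ecP (PF u) = dn u"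
proof -
  have t: "lext ecP (Phi_tree t) = dn {#t#}" for t
  proof -
    have "lext ecP (Phi_tree t) = lext ecu (phi t)"
      unfolding Phi_tree_lext lext_lext
      by (rule lext_cong) (auto simp: ecu_def ecP_def nt_empty_iff split: prod.split)
    then show ?thesis by (simp add: counit_phi)
  qed
  have "lext ecP (PF u) = prod_mset (image_mset (\<lambda>t. lext ecP (Phi_tree t)) u)"
    unfolding PF_def by (rule lext_prod_mset) (simp_all add: ecP_mult ecP_0)
  then show ?thesis using prod_dn_single[of u] by (simp add: t)
qed



section \<open>Support invariants\<close>

primrec tsz :: "tree \<Rightarrow> nat" where
  "tsz (Node M) = Suc (sum_mset (image_mset tsz M))"

definition nvF :: "forest \<Rightarrow> nat" where "nvF F = sum_mset (image_mset tsz F)"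
definition efF :: "forest \<Rightarrow> nat" where "efF F = sum_mset (image_mset (\<lambda>x. tsz x - 1) F)"
definition bad :: "forest \<Rightarrow> nat" where "bad F = size (filter_mset (\<lambda>x. \<not> has_edge x) F)"

lemma nvF_simps[simp]: "nvF {#} = 0" "nvF (F + G) = nvF F + nvF G" "nvF {#x#} = tsz x" "nvF (add_mset x F) = tsz x + nvF F"
  by (simp_all add: nvF_def)
lemma efF_simps[simp]: "efF {#} = 0" "efF (F + G) = efF F + efF G" "efF {#x#} = tsz x - 1"
  by (simp_all add: efF_def)
lemma bad_simps[simp]: "bad {#} = 0" "bad (F + G) = bad F + bad G"
  by (simp_all add: bad_def)
lemma tsz_pos: "tsz t \<ge> 1"
  by (cases t) simp
lemma tsz_children: "tsz Q = Suc (nvF (children Q))"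
  by (cases Q) (simp add: nvF_def)
lemma efF_nt: "efF (nt R) = tsz R - 1"
  by (cases R) (auto simp: nt_def has_edge_def)
lemma bad_nt: "bad (nt R) = 0"
  by (simp add: nt_def bad_def)
lemma bad_0_iff: "bad F = 0 \<longleftrightarrow> (\<forall>x\<in>#F. has_edge x)"
  by (auto simp: bad_def filter_mset_eq_conv)

lemma keys_lext_ex: "k \<in> Poly_Mapping.keys (lext f X) \<Longrightarrow> \<exists>p\<in>Poly_Mapping.keys X. k \<in> Poly_Mapping.keys (f p)"
  using keys_lext by fastforce

lemma keys_prod_w:
  fixes w :: "'a::comm_monoid_add \<Rightarrow> nat" and h :: "'c \<Rightarrow> 'a nm"
  assumes wadd: "\<And>a b. w (a + b) = w a + w b" and w0: "w 0 = 0"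
    and hk: "\<And>x k. x \<in># M \<Longrightarrow> k \<in> Poly_Mapping.keys (h x) \<Longrightarrow> w k = c x"
    and k: "k \<in> Poly_Mapping.keys (prod_mset (image_mset h M))"
  shows "w k = sum_mset (image_mset c M)"
  using hk k
proof (induction M arbitrary: k)
  case empty
  then show ?case using w0 by simp
next
  case (add x M)
  from add.prems(2) obtain a b where "k = a + b" "a \<in> Poly_Mapping.keys (h x)" "b \<in> Poly_Mapping.keys (prod_mset (image_mset h M))"
    using keys_mult[of "h x" "prod_mset (image_mset h M)"] by auto
  moreover have "w a = c x" using add.prems(1) \<open>a \<in> _\<close> by simp
  moreover have "w b = sum_mset (image_mset c M)" using add.IH[of b] add.prems(1) \<open>b \<in> _\<close> by simp
  ultimately show ?case using wadd by simp
qed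

lemma keys_dn2: "k \<in> Poly_Mapping.keys (dn a + dn b) \<Longrightarrow> k = a \<or> k = b"
  using keys_add[of "dn a" "dn b"] by auto

definition wa :: "triple \<Rightarrow> nat" where "wa = (\<lambda>(F,RC,QC). nvF QC + efF F + nvF RC)"
definition wb :: "triple \<Rightarrow> nat" where "wb = (\<lambda>(F,RC,QC). bad F)"

lemma wa_add: "wa (a + b) = wa a + wa b" by (cases a; cases b) (simp add: wa_def)
lemma wb_add: "wb (a + b) = wb a + wb b" by (cases a; cases b) (simp add: wb_def)
lemma wa_0: "wa 0 = 0" by (simp add: wa_def zero_prod_def)
lemma wb_0: "wb 0 = 0" by (simp add: wb_def zero_prod_def)

lemma keys_phi: "(F,R,Q) \<in> Poly_Mapping.keys (phi t) \<Longrightarrow> tsz Q + efF F + tsz R = Suc (tsz t) \<and> bad F = 0"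
proof (induction t arbitrary: F R Q)
  case (Node M)
  have ch: "wa k = tsz c \<and> wb k = 0" if "c \<in># M" "k \<in> Poly_Mapping.keys (child_opts (phi c))" for c k
  proof -
    from keys_lext_ex[OF that(2)[unfolded child_opts_lext]] obtain p where p: "p \<in> Poly_Mapping.keys (phi c)"
      "k \<in> Poly_Mapping.keys (case p of (F,R,Q) \<Rightarrow> dn (F + nt R, {#}, {#Q#}) + dn (F, {#R#}, children Q))"
      by blast
    obtain F' R' Q' where pp: "p = (F',R',Q')" by (cases p) auto
    have ih: "tsz Q' + efF F' + tsz R' = Suc (tsz c) \<and> bad F' = 0"
      using Node.IH[OF that(1)] p(1) pp by simp
    from p(2) pp have "k = (F' + nt R', {#}, {#Q'#}) \<or> k = (F', {#R'#}, children Q')"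
      using keys_dn2 by simp
    then show ?thesis
      using ih tsz_pos[of R'] tsz_children[of Q'] by (auto simp: wa_def wb_def efF_nt bad_nt)
  qed
  have poa: "wa k = nvF M" and pob: "wb k = 0" if "k \<in> Poly_Mapping.keys (PO M)" for k
  proof -
    show "wa k = nvF M"
      using keys_prod_w[of wa M "\<lambda>w. child_opts (phi w)" tsz k] that ch wa_add wa_0
      unfolding PO_def by (simp add: nvF_def)
    show "wb k = 0"
      using keys_prod_w[of wb M "\<lambda>w. child_opts (phi w)" "\<lambda>_. 0" k] that ch wb_add wb_0
      unfolding PO_def by simp
  qed
  from keys_lext_ex[OF Node.prems[unfolded phi_Node]] obtain p where p: "p \<in> Poly_Mapping.keys (PO M)"
    "(F,R,Q) \<in> Poly_Mapping.keys (case p of (F,RC,QC) \<Rightarrow> dn (F, Node RC, Node QC))"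
    by blast
  obtain F' RC QC where pp: "p = (F',RC,QC)" by (cases p) auto
  from p(2) pp have "F = F'" "R = Node RC" "Q = Node QC" by auto
  then show ?case using poa[OF p(1)] pob[OF p(1)] pp by (simp add: wa_def wb_def nvF_def)
qed

definition wP1 :: "forest \<times> forest \<Rightarrow> nat" where "wP1 = (\<lambda>(S,Q). nvF Q + efF S)"
definition wP2 :: "forest \<times> forest \<Rightarrow> nat" where "wP2 = (\<lambda>(S,Q). bad S)"
definition wP3 :: "forest \<times> forest \<Rightarrow> nat" where "wP3 = (\<lambda>(S,Q). size Q)"

lemma keys_Phi_tree: "k \<in> Poly_Mapping.keys (Phi_tree t) \<Longrightarrow> wP1 k = tsz t \<and> wP2 k = 0 \<and> wP3 k = 1"
proof -
  assume "k \<in> Poly_Mapping.keys (Phi_tree t)"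
  from keys_lext_ex[OF this[unfolded Phi_tree_lext]] obtain p where p: "p \<in> Poly_Mapping.keys (phi t)" "k \<in> Poly_Mapping.keys (case p of (F,R,Q) \<Rightarrow> dn (F + nt R, {#Q#}))"
    by blast
  obtain F R Q where pp: "p = (F,R,Q)" by (cases p) auto
  have "tsz Q + efF F + tsz R = Suc (tsz t) \<and> bad F = 0" using keys_phi p(1) pp by simp
  moreover have "k = (F + nt R, {#Q#})" using p(2) pp by simp
  ultimately show ?thesis using tsz_pos[of R] by (simp add: wP1_def wP2_def wP3_def efF_nt bad_nt; arith)
qed

lemma keys_PF:
  assumes "(S,Q) \<in> Poly_Mapping.keys (PF u)"
  shows "nvF Q + efF S = nvF u" "\<forall>x\<in>#S. has_edge x" "size Q = size u"
proof -
  have add: "wP1 (a + b) = wP1 a + wP1 b" "wP2 (a + b) = wP2 a + wP2 b" "wP3 (a + b) = wP3 a + wP3 b" for a b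
    by (cases a; cases b; simp add: wP1_def wP2_def wP3_def)+
  have z: "wP1 0 = 0" "wP2 0 = 0" "wP3 0 = 0" by (simp_all add: wP1_def wP2_def wP3_def zero_prod_def)
  have "wP1 (S,Q) = sum_mset (image_mset tsz u)"
    using keys_prod_w[of wP1 u Phi_tree tsz "(S,Q)"] add z assms keys_Phi_tree unfolding PF_def by blast
  then show "nvF Q + efF S = nvF u" by (simp add: wP1_def nvF_def)
  have "wP2 (S,Q) = sum_mset (image_mset (\<lambda>_. 0) u)"
    using keys_prod_w[of wP2 u Phi_tree "\<lambda>_. 0" "(S,Q)"] add z assms keys_Phi_tree unfolding PF_def by blast
  then show "\<forall>x\<in>#S. has_edge x" by (simp add: wP2_def bad_0_iff)
  have "wP3 (S,Q) = sum_mset (image_mset (\<lambda>_. 1) u)"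
    using keys_prod_w[of wP3 u Phi_tree "\<lambda>_. 1" "(S,Q)"] add z assms keys_Phi_tree unfolding PF_def by blast
  then show "size Q = size u" by (simp add: wP3_def size_multiset_overloaded_eq)
qed

lemma efF_pos: "\<forall>x\<in>#S. has_edge x \<Longrightarrow> S \<noteq> {#} \<Longrightarrow> efF S \<ge> 1"
proof -
  assume e: "\<forall>x\<in>#S. has_edge x" and ne: "S \<noteq> {#}"
  then obtain x S' where S: "S = add_mset x S'" by (cases S) auto
  have "has_edge x" using e S by simp
  then obtain M where "x = Node M" "M \<noteq> {#}" by (cases x) (auto simp: has_edge_def)
  then have "tsz x \<ge> 2"
  proof -
    assume a: "x = Node M" "M \<noteq> {#}"
    then obtain y M' where "M = add_mset y M'" by (cases M) auto
    then show ?thesis using a tsz_pos[of y] by simp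
  qed
  then show ?thesis using S by (simp add: efF_def)
qed

lemma keys_PF_less: "(S,Q) \<in> Poly_Mapping.keys (PF u) \<Longrightarrow> S \<noteq> {#} \<Longrightarrow> nvF Q < nvF u"
  using keys_PF[of S Q u] efF_pos[of S] by auto



section \<open>Evaluating nat-coefficient elements in a k-module\<close>

definition ev :: "('a \<Rightarrow> ('b \<Rightarrow>\<^sub>0 'k::comm_semiring_1)) \<Rightarrow> 'a nm \<Rightarrow> ('b \<Rightarrow>\<^sub>0 'k)" where
  "ev h X = (\<Sum>p\<in>Poly_Mapping.keys X. smult (of_nat (Poly_Mapping.lookup X p)) (h p))"

lemma ev_zero[simp]: "ev h 0 = 0"
  by (simp add: ev_def)

lemma ev_add: "ev h (X + Y) = ev h X + ev h Y"
  unfolding ev_def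
  by (rule setsum_keys_plus_distrib) (simp_all add: lookup_add smult_add_left)

lemma ev_single: "ev h (Poly_Mapping.single p c) = smult (of_nat c) (h p)"
  by (cases "c = 0") (simp_all add: ev_def)

lemma ev_dn[simp]: "ev h (Poly_Mapping.single p (Suc 0)) = h p"
  by (simp add: ev_single)

lemma ev_dn1[simp]: "ev h (dn p) = h p"
  by (simp add: ev_single)

lemma ev_cong: "(\<And>p. p \<in> Poly_Mapping.keys X \<Longrightarrow> f p = g p) \<Longrightarrow> ev f X = ev g X"
  by (simp add: ev_def)

lemma ev_smult_nat: "ev h (smult c Y) = smult (of_nat c) (ev h Y)"
  by (induction Y rule: pm_induct) (simp_all add: smult_single ev_single ev_add smult_add_right smult_smult)

lemma ev_lext: "ev h (lext g X) = ev (\<lambda>p. ev h (g p)) X"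
  by (induction X rule: pm_induct) (simp_all add: lext_single ev_single ev_add lext_add ev_smult_nat)

lemma ev_plus_fun: "ev (\<lambda>p. f p + g p) X = ev f X + ev g X"
  by (induction X rule: pm_induct) (simp_all add: ev_add ev_single smult_add_right add_ac)

lemma ev_plus_cong: "(\<And>p. p \<in> Poly_Mapping.keys X \<Longrightarrow> h p = f p + g p) \<Longrightarrow> ev h X = ev f X + ev g X"
  using ev_cong[of X h "\<lambda>p. f p + g p"] ev_plus_fun by metis

lemma ev_smult_fun: "ev (\<lambda>p. smult c (f p)) X = smult c (ev f X)"
  by (induction X rule: pm_induct) (simp_all add: ev_add ev_single smult_add_right smult_smult mult.commute)

lemma ev_zero_fun[simp]: "ev (\<lambda>p. 0) X = 0"
  by (induction X rule: pm_induct) (simp_all add: ev_add ev_single)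

lemma lext_ev: "lext g (ev h X) = ev (\<lambda>p. lext g (h p)) X"
  by (induction X rule: pm_induct) (simp_all add: ev_add ev_single lext_add lext_smult)

lemma ev_mult_right: "ev h X * P = ev (\<lambda>p. h p * P) X"
  by (induction X rule: pm_induct) (simp_all add: ev_add ev_single distrib_right smult_mult_left)

lemma ev_mult_left:
  fixes P :: "'b::comm_monoid_add \<Rightarrow>\<^sub>0 'k::comm_semiring_1"
  shows "P * ev h X = ev (\<lambda>p. P * h p) X"
  by (induction X rule: pm_induct) (simp_all add: ev_add ev_single distrib_left smult_mult_right)

lemma mult_expand_nat:
  fixes A B :: "'a::comm_monoid_add nm"
  shows "A * B = lext (\<lambda>a. lext (\<lambda>b. dn (a + b)) B) A"
  using lext_mult_lext[of dn A dn B] by (simp add: mult_single)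

lemma ev_mult_expand:
  fixes A B :: "'a::comm_monoid_add nm"
  shows "ev h (A * B) = ev (\<lambda>a. ev (\<lambda>b. h (a + b)) B) A"
  unfolding mult_expand_nat[of A B] by (simp add: ev_lext)

lemma ev_mult_ev:
  fixes h1 :: "'a \<Rightarrow> ('b::comm_monoid_add \<Rightarrow>\<^sub>0 'k::comm_semiring_1)"
  shows "ev h1 A * ev h2 B = ev (\<lambda>a. ev (\<lambda>b. h1 a * h2 b) B) A"
  by (subst ev_mult_right) (simp add: ev_mult_left)

lemma keys_ev: "Poly_Mapping.keys (ev h X) \<subseteq> (\<Union>p\<in>Poly_Mapping.keys X. Poly_Mapping.keys (h p))"
  unfolding ev_def using keys_sum keys_smult by fastforce

lemma lookup_ev: "Poly_Mapping.lookup (ev h X) k = (\<Sum>p\<in>Poly_Mapping.keys X. of_nat (Poly_Mapping.lookup X p) * Poly_Mapping.lookup (h p) k)"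
  by (simp add: ev_def lookup_sum lookup_smult)

lemma lext_ofn: "lext f (of_nat_pm X :: 'a \<Rightarrow>\<^sub>0 'k::comm_semiring_1) = ev f X"
proof (induction X rule: pm_induct)
  case zero
  have "Poly_Mapping.map of_nat (0::'a nm) = (0 :: 'a \<Rightarrow>\<^sub>0 'k)" by (simp only: map_eq_zero_iff) simp
  then show ?case by (simp add: of_nat_pm_def)
next
  case (single k c)
  then show ?case by (simp add: of_nat_pm_def lext_single ev_single)
next
  case (add x y)
  have "of_nat_pm (x + y) = (of_nat_pm x + of_nat_pm y :: 'a \<Rightarrow>\<^sub>0 'k)"
    by (rule poly_mapping_eqI) (simp add: of_nat_pm_def lookup_add Poly_Mapping.map.rep_eq when_def)
  then show ?case using add by (simp add: lext_add ev_add)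
qed

lemma counit_ev: "ev (\<lambda>(S,Q). if S = {#} then g Q else 0) (PF u) = g u"
proof -
  have "ev g (lext ecP (PF u)) = g u" by (simp add: counit_PF)
  moreover have "ev g (lext ecP (PF u)) = ev (\<lambda>(S,Q). if S = {#} then g Q else 0) (PF u)"
    unfolding ev_lext by (rule ev_cong) (auto simp: ecP_def)
  ultimately show ?thesis by simp
qed

lemma N1_ev: "ev (\<lambda>p. ev H (lopf p)) (PF u) = ev (\<lambda>p. ev H (ropf p)) (CF u)"
  using N1[of u] by (metis ev_lext)



definition hk :: "(forest \<Rightarrow> 'k::comm_ring_1) \<Rightarrow> forest \<times> forest \<Rightarrow> (forest \<Rightarrow>\<^sub>0 'k)" where
  "hk a p = Poly_Mapping.single (snd p) (a (fst p))"

definition dk :: "(forest \<Rightarrow> 'k::comm_ring_1) \<Rightarrow> forest \<Rightarrow> (forest \<Rightarrow>\<^sub>0 'k)" where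
  "dk a u = ev (hk a) (PF u)"

lemma Phi_lext: "Phi x = lext (\<lambda>u. of_nat_pm (PF u)) x"
  by (simp add: Phi_def PF_def)

lemma DeltaCK_lext: "DeltaCK x = lext (\<lambda>u. of_nat_pm (CF u)) x"
  by (simp add: DeltaCK_def CF_def)

lemma left_apply_lext: "left_apply a X = lext (hk a) X"
  unfolding left_apply_def lext_def hk_def by (rule sum.cong) (simp_all add: smult_single)

lemma tL_lext: "tL a = lext (dk a)"
  by (rule ext) (simp add: tL_def left_apply_lext Phi_lext lext_lext lext_ofn dk_def[abs_def])

lemma tmap_lext: "tmap f g X = lext (\<lambda>p. tensor (f (dl (fst p))) (g (dl (snd p)))) X"
  by (simp add: tmap_def lext_def)

lemma tensor_lext: "tensor P Q = lext (\<lambda>F. lext (\<lambda>G. dl (F,G)) Q) P"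
  unfolding tensor_def lext_def
  by (simp add: smult_sum smult_single mult.assoc)

lemma tL_dl: "tL a (dl u) = dk a u"
  by (simp add: tL_lext)

lemma lfun_dl: "lfun a (dl S) = a S"
  by (simp add: lfun_def)

lemma epsH_dl: "epsH (dl S) = (if S = {#} then 1 else 0)"
  by (simp add: epsH_def lookup_single)

lemma dl_Hset: "\<forall>x\<in>#S. has_edge x \<Longrightarrow> dl S \<in> Hset"
  by (simp add: Hset_def)

lemma inf_split:
  assumes "infinitesimal_character a" "\<forall>x\<in>#S1. has_edge x" "\<forall>x\<in>#S2. has_edge x"
  shows "a (S1 + S2) = a S1 * (if S2 = {#} then 1 else 0) + (if S1 = {#} then 1 else 0) * a S2"
proof -
  have "lfun a (dl S1 * dl S2) = lfun a (dl S1) * epsH (dl S2) + epsH (dl S1) * lfun a (dl S2)"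
    using assms(1) dl_Hset[OF assms(2)] dl_Hset[OF assms(3)]
    unfolding infinitesimal_character_def by blast
  then show ?thesis by (simp only: mult_single lfun_dl epsH_dl mult_1)
qed

lemma char_split:
  assumes "character \<phi>" "\<forall>x\<in>#S1. has_edge x" "\<forall>x\<in>#S2. has_edge x"
  shows "\<phi> (S1 + S2) = \<phi> S1 * \<phi> S2"
proof -
  have "lfun \<phi> (dl S1 * dl S2) = lfun \<phi> (dl S1) * lfun \<phi> (dl S2)"
    using assms(1) dl_Hset[OF assms(2)] dl_Hset[OF assms(3)]
    unfolding character_def by blast
  then show ?thesis by (simp only: mult_single lfun_dl mult_1)
qed

lemma char_one: "character \<phi> \<Longrightarrow> \<phi> {#} = 1"
  unfolding character_def lfun_def by simp

lemma counit_ev': "ev (\<lambda>p. if fst p = {#} then g (snd p) else 0) (PF u) = g u"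
  using counit_ev[of g u] by (simp add: split_def)

lemma keys_PF_edge: "p \<in> Poly_Mapping.keys (PF u) \<Longrightarrow> \<forall>x\<in>#fst p. has_edge x"
  using keys_PF(2)[of "fst p" "snd p" u] by simp



lemma mult_expand_k:
  fixes x y :: "'a::comm_monoid_add \<Rightarrow>\<^sub>0 'k::comm_semiring_1"
  shows "x * y = lext (\<lambda>u. lext (\<lambda>v. dl (u + v)) y) x"
  using lext_mult_lext[of dl x dl y] by (simp add: mult_single)

lemma lext_deriv:
  fixes d :: "'a::comm_monoid_add \<Rightarrow> ('a \<Rightarrow>\<^sub>0 'k::comm_semiring_1)"
  assumes "\<And>u v. d (u + v) = d u * dl v + dl u * d v"
  shows "lext d (x * y) = lext d x * y + x * lext d y"
proof -
  have "lext d (x * y) = lext (\<lambda>u. lext (\<lambda>v. d (u + v)) y) x"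
    unfolding mult_expand_k[of x y] by (simp add: lext_lext)
  also have "\<dots> = lext (\<lambda>u. lext (\<lambda>v. d u * dl v) y) x + lext (\<lambda>u. lext (\<lambda>v. dl u * d v) y) x"
    by (rule lext_plus_cong, rule lext_plus_cong) (rule assms)
  also have "\<dots> = lext d x * lext dl y + lext dl x * lext d y"
    by (simp only: lext_mult_lext)
  finally show ?thesis by simp
qed

lemma ev_one: "ev h (1 :: 'a::zero nm) = h 0"
  by (metis ev_dn1 single_one)

lemma deriv_pt:
  assumes inf: "infinitesimal_character a"
  shows "dk a (u + v) = dk a u * dl v + dl u * dk a v"
proof -
  define e :: "forest \<times> forest \<Rightarrow> (forest \<Rightarrow>\<^sub>0 'a)" where "e = (\<lambda>p. if fst p = {#} then dl (snd p) else 0)"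
  have cu: "ev e (PF w) = dl w" for w unfolding e_def by (rule counit_ev')
  have pt: "hk a (p + q) = hk a p * e q + e p * hk a q"
    if "p \<in> Poly_Mapping.keys (PF u)" "q \<in> Poly_Mapping.keys (PF v)" for p q
  proof -
    have sp: "a (fst p + fst q) = a (fst p) * (if fst q = {#} then 1 else 0) + (if fst p = {#} then 1 else 0) * a (fst q)"
      by (rule inf_split[OF inf keys_PF_edge[OF that(1)] keys_PF_edge[OF that(2)]])
    show ?thesis unfolding hk_def e_def
      using sp by (cases "fst p = {#}"; cases "fst q = {#}") (simp_all add: mult_single single_add)
  qed
  have "dk a (u + v) = ev (\<lambda>p. ev (\<lambda>q. hk a (p + q)) (PF v)) (PF u)"
    unfolding dk_def by (simp add: ev_mult_expand)
  also have "\<dots> = ev (\<lambda>p. ev (\<lambda>q. hk a p * e q) (PF v)) (PF u) + ev (\<lambda>p. ev (\<lambda>q. e p * hk a q) (PF v)) (PF u)"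
    by (rule ev_plus_cong, rule ev_plus_cong) (rule pt)
  also have "\<dots> = dk a u * ev e (PF v) + ev e (PF u) * dk a v"
    by (simp add: dk_def ev_mult_ev)
  finally show ?thesis by (simp add: cu)
qed

lemma mult_pt:
  assumes ch: "character \<phi>"
  shows "dk \<phi> (u + v) = dk \<phi> u * dk \<phi> v"
proof -
  have pt: "hk \<phi> (p + q) = hk \<phi> p * hk \<phi> q"
    if "p \<in> Poly_Mapping.keys (PF u)" "q \<in> Poly_Mapping.keys (PF v)" for p q
    using char_split[OF ch keys_PF_edge[OF that(1)] keys_PF_edge[OF that(2)]]
    by (simp add: hk_def mult_single)
  have "dk \<phi> (u + v) = ev (\<lambda>p. ev (\<lambda>q. hk \<phi> (p + q)) (PF v)) (PF u)"
    unfolding dk_def by (simp add: ev_mult_expand)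
  also have "\<dots> = ev (\<lambda>p. ev (\<lambda>q. hk \<phi> p * hk \<phi> q) (PF v)) (PF u)"
    by (rule ev_cong, rule ev_cong) (rule pt)
  finally show ?thesis by (simp add: dk_def ev_mult_ev)
qed

lemma tL_deriv: "infinitesimal_character a \<Longrightarrow> tL a (x * y) = tL a x * y + x * tL a y"
  unfolding tL_lext by (rule lext_deriv) (rule deriv_pt)

lemma tL_mult: "character \<phi> \<Longrightarrow> tL \<phi> (x * y) = tL \<phi> x * tL \<phi> y"
  unfolding tL_lext by (rule lext_mult_hom2) (rule mult_pt)

lemma dk_0: "character \<phi> \<Longrightarrow> dk \<phi> {#} = 1"
  by (simp add: dk_def ev_one hk_def zero_prod_def char_one)

lemma tL_one: "character \<phi> \<Longrightarrow> tL \<phi> 1 = 1"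
  by (simp add: tL_lext lext_one dk_0)

lemma tL_linear: "linear_map (tL a)"
  unfolding linear_map_def tL_lext by (simp add: lext_add lext_smult)



definition H3 :: "(forest \<Rightarrow> 'k::comm_ring_1) \<Rightarrow> forest \<times> forest \<times> forest \<Rightarrow> (forest \<times> forest \<Rightarrow>\<^sub>0 'k)" where
  "H3 a t = Poly_Mapping.single (snd t) (a (fst t))"

lemma ofn_ev: "of_nat_pm X = (ev dl X :: 'a \<Rightarrow>\<^sub>0 'k::comm_semiring_1)"
  using lext_ofn[of dl X] by simp

lemma single_smult: "Poly_Mapping.single k c = smult c (dl k)"
  by (simp add: smult_single)

lemma Delta_dk_N: "DeltaCK (dk a u) = ev (\<lambda>p. ev (H3 a) (ropf p)) (CF u)"
proof -
  have "DeltaCK (dk a u) = ev (\<lambda>p. lext (\<lambda>v. of_nat_pm (CF v)) (hk a p)) (PF u)"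
    unfolding DeltaCK_lext dk_def by (rule lext_ev)
  also have "\<dots> = ev (\<lambda>p. ev (H3 a) (lopf p)) (PF u)"
  proof (rule ev_cong)
    fix p :: "forest \<times> forest"
    obtain S Q where p: "p = (S,Q)" by (cases p) auto
    have "lext (\<lambda>v. of_nat_pm (CF v)) (hk a p) = smult (a S) (ev dl (CF Q))"
      by (simp add: p hk_def lext_single ofn_ev)
    moreover have "ev (H3 a) (lopf p) = smult (a S) (ev dl (CF Q))"
      unfolding p lopf_def by (simp add: ev_lext split_def H3_def single_smult[of _ "a S"] ev_smult_fun)
    ultimately show "lext (\<lambda>v. of_nat_pm (CF v)) (hk a p) = ev (H3 a) (lopf p)" by simp
  qed
  also have "\<dots> = ev (\<lambda>p. ev (H3 a) (ropf p)) (CF u)" by (rule N1_ev)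
  finally show ?thesis .
qed

lemma ropf_ev: "ev (H3 a) (ropf (V,W)) = ev (\<lambda>p. ev (\<lambda>q. Poly_Mapping.single (snd p, snd q) (a (fst p + fst q))) (PF W)) (PF V)"
  unfolding ropf_def by (simp add: ev_lext split_def H3_def)

lemma tensor_left_dk: "tensor (dk a V) (dl W) = ev (\<lambda>p. Poly_Mapping.single (snd p, W) (a (fst p))) (PF V)"
  unfolding tensor_lext dk_def by (simp add: lext_ev hk_def lext_single smult_single)

lemma tensor_right_dk: "tensor (dl V) (dk a W) = ev (\<lambda>q. Poly_Mapping.single (V, snd q) (a (fst q))) (PF W)"
  unfolding tensor_lext dk_def by (simp add: lext_ev hk_def lext_single smult_single)

lemma tensor_dk_dk: "tensor (dk a V) (dk a W) = ev (\<lambda>p. ev (\<lambda>q. Poly_Mapping.single (snd p, snd q) (a (fst p) * a (fst q))) (PF W)) (PF V)"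
  unfolding tensor_lext dk_def by (simp add: lext_ev hk_def lext_single smult_single ev_smult_fun[symmetric])

lemma ev_if_const: "ev (\<lambda>q. if c then G q else 0) X = (if c then ev G X else 0)"
  by (cases c) simp_all

lemma inf_pt:
  assumes inf: "infinitesimal_character a"
  shows "ev (H3 a) (ropf (V,W)) = tensor (dk a V) (dl W) + tensor (dl V) (dk a W)"
proof -
  define G where "G = (\<lambda>Qv::forest. ev (\<lambda>q. Poly_Mapping.single (Qv, snd q) (a (fst q))) (PF W))"
  have inner: "ev (\<lambda>q. Poly_Mapping.single (snd p, snd q) (a (fst p + fst q))) (PF W)
      = Poly_Mapping.single (snd p, W) (a (fst p)) + (if fst p = {#} then G (snd p) else 0)"
    if p: "p \<in> Poly_Mapping.keys (PF V)" for p
  proof -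
    have "ev (\<lambda>q. Poly_Mapping.single (snd p, snd q) (a (fst p + fst q))) (PF W)
      = ev (\<lambda>q. smult (a (fst p)) (if fst q = {#} then dl (snd p, snd q) else 0)) (PF W)
        + ev (\<lambda>q. if fst p = {#} then Poly_Mapping.single (snd p, snd q) (a (fst q)) else 0) (PF W)"
    proof (rule ev_plus_cong)
      fix q assume q: "q \<in> Poly_Mapping.keys (PF W)"
      have sp: "a (fst p + fst q) = a (fst p) * (if fst q = {#} then 1 else 0) + (if fst p = {#} then 1 else 0) * a (fst q)"
        by (rule inf_split[OF inf keys_PF_edge[OF p] keys_PF_edge[OF q]])
      show "Poly_Mapping.single (snd p, snd q) (a (fst p + fst q)) =
        smult (a (fst p)) (if fst q = {#} then dl (snd p, snd q) else 0) +
        (if fst p = {#} then Poly_Mapping.single (snd p, snd q) (a (fst q)) else 0)"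
        using sp by (cases "fst p = {#}"; cases "fst q = {#}") (simp_all add: smult_single single_add)
    qed
    also have "\<dots> = Poly_Mapping.single (snd p, W) (a (fst p)) + (if fst p = {#} then G (snd p) else 0)"
      by (simp only: ev_smult_fun ev_if_const counit_ev'[of "\<lambda>Qw. dl (snd p, Qw)"]) (simp add: smult_single G_def)
    finally show ?thesis .
  qed
  have "ev (H3 a) (ropf (V,W)) = ev (\<lambda>p. Poly_Mapping.single (snd p, W) (a (fst p))) (PF V) + ev (\<lambda>p. if fst p = {#} then G (snd p) else 0) (PF V)"
    unfolding ropf_ev by (rule ev_plus_cong) (rule inner)
  also have "\<dots> = tensor (dk a V) (dl W) + G V"
    by (simp add: tensor_left_dk counit_ev'[of G])
  also have "G V = tensor (dl V) (dk a W)"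
    by (simp add: G_def tensor_right_dk)
  finally show ?thesis .
qed

lemma char_pt:
  assumes ch: "character \<phi>"
  shows "ev (H3 \<phi>) (ropf (V,W)) = tensor (dk \<phi> V) (dk \<phi> W)"
  unfolding ropf_ev tensor_dk_dk
  by (rule ev_cong, rule ev_cong) (simp add: char_split[OF ch keys_PF_edge keys_PF_edge])

lemma DeltaCK_tL: "DeltaCK (tL a x) = lext (\<lambda>u. DeltaCK (dk a u)) x"
  by (simp add: tL_lext DeltaCK_lext[of "lext _ _"] lext_lext DeltaCK_lext[of "dk _ _", symmetric])

lemma tmap_Delta: "tmap f g (DeltaCK x) = lext (\<lambda>u. ev (\<lambda>p. tensor (f (dl (fst p))) (g (dl (snd p)))) (CF u)) x"
  by (simp add: tmap_lext DeltaCK_lext lext_lext lext_ofn)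

lemma tL_coder: "infinitesimal_character a \<Longrightarrow> DeltaCK (tL a x) = tmap (tL a) id (DeltaCK x) + tmap id (tL a) (DeltaCK x)"
  unfolding DeltaCK_tL tmap_Delta
  apply (rule lext_plus_cong)
  apply (simp add: Delta_dk_N tL_dl ev_plus_fun[symmetric])
  apply (rule ev_cong)
  apply (case_tac pa)
  apply (simp add: inf_pt)
  done

lemma tL_cohom: "character \<phi> \<Longrightarrow> DeltaCK (tL \<phi> x) = tmap (tL \<phi>) (tL \<phi>) (DeltaCK x)"
  unfolding DeltaCK_tL tmap_Delta
  apply (rule lext_cong)
  apply (simp add: Delta_dk_N tL_dl)
  apply (rule ev_cong)
  apply (case_tac pa)
  apply (simp add: char_pt)
  done



lemma lookup_lext: "Poly_Mapping.lookup (lext d x) k = (\<Sum>u\<in>Poly_Mapping.keys x. Poly_Mapping.lookup x u * Poly_Mapping.lookup (d u) k)"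
  by (simp add: lext_def lookup_sum lookup_smult)

lemma lext_diff:
  fixes x y :: "'a \<Rightarrow>\<^sub>0 'k::comm_ring_1"
  shows "lext d (x - y) = lext d x - lext d y"
  using lext_add[of d "x - y" y] by (simp add: eq_diff_eq)

lemma lookup_dk_empty:
  assumes "character \<phi>"
  shows "Poly_Mapping.lookup (dk \<phi> u) {#} = (if u = {#} then 1 else 0)"
proof (cases "u = {#}")
  case True then show ?thesis using dk_0[OF assms] by simp
next
  case False
  have "Poly_Mapping.lookup (hk \<phi> p) {#} = 0" if "p \<in> Poly_Mapping.keys (PF u)" for p
  proof -
    have "size (snd p) = size u" using keys_PF(3)[of "fst p" "snd p" u] that by simp
    then have "snd p \<noteq> {#}" using False by auto
    then show ?thesis by (simp add: hk_def lookup_single)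
  qed
  then show ?thesis using False by (simp add: dk_def lookup_ev)
qed

lemma tL_eps: "character \<phi> \<Longrightarrow> epsCK (tL \<phi> x) = epsCK x"
proof -
  assume ch: "character \<phi>"
  have "epsCK (tL \<phi> x) = (\<Sum>u\<in>Poly_Mapping.keys x. Poly_Mapping.lookup x u * (if u = {#} then 1 else 0))"
    by (simp add: epsCK_def tL_lext lookup_lext lookup_dk_empty[OF ch])
  also have "\<dots> = Poly_Mapping.lookup x {#}"
    by (simp add: if_distrib[of "\<lambda>t. _ * t"] sum.delta in_keys_iff cong: if_cong)
  finally show ?thesis by (simp add: epsCK_def)
qed

section \<open>Bijectivity by unitriangularity\<close>

lemma span_range:
  fixes D :: "('a \<Rightarrow>\<^sub>0 'k::comm_ring_1) \<Rightarrow> ('a \<Rightarrow>\<^sub>0 'k)"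
  assumes lin: "D = lext d"
    and "\<And>k. k \<in> Poly_Mapping.keys y \<Longrightarrow> dl k \<in> range D"
  shows "y \<in> range D"
proof -
  have sm: "smult c z \<in> range D" if "z \<in> range D" for c z
  proof -
    from that obtain w where w: "z = D w" by auto
    then have "D (smult c w) = smult c z" using lin by (simp add: lext_smult)
    then show ?thesis by (metis rangeI)
  qed
  have ad: "z1 + z2 \<in> range D" if "z1 \<in> range D" "z2 \<in> range D" for z1 z2
  proof -
    from that obtain w1 w2 where "z1 = D w1" "z2 = D w2" by auto
    then have "D (w1 + w2) = z1 + z2" using lin by (simp add: lext_add)
    then show ?thesis by (metis rangeI)
  qed
  have z: "0 \<in> range D"
  proof -
    have "D 0 = 0" using lin by simp
    then show ?thesis by (metis rangeI)
  qed
  have "(\<Sum>k\<in>K. smult (Poly_Mapping.lookup y k) (dl k)) \<in> range D" if "K \<subseteq> Poly_Mapping.keys y" for K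
  proof -
    have "finite K" using that by (rule finite_subset) simp
    then show ?thesis using that
      by (induction K rule: finite_induct) (auto intro!: ad sm z assms(2))
  qed
  moreover have "(\<Sum>k\<in>Poly_Mapping.keys y. smult (Poly_Mapping.lookup y k) (dl k)) = y"
    using pm_expand[of y] by (simp add: smult_single)
  ultimately show ?thesis by (metis order_refl)
qed

lemma bij_tri:
  fixes d :: "'a \<Rightarrow> ('a \<Rightarrow>\<^sub>0 'k::comm_ring_1)" and m :: "'a \<Rightarrow> nat"
  assumes dr: "\<And>u. d u = dl u + r u"
    and rk: "\<And>u. Poly_Mapping.keys (r u) \<subseteq> {Q. m Q < m u}"
  shows "bij (lext d)"
proof (rule bijI)
  show "inj (lext d)"
  proof (rule injI)
    fix x y assume eq: "lext d x = lext d y"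
    define z where "z = x - y"
    have z0: "lext d z = 0" using eq by (simp add: z_def lext_diff)
    show "x = y"
    proof (rule ccontr)
      assume "x \<noteq> y"
      then have "z \<noteq> 0" by (simp add: z_def)
      then have ne: "Poly_Mapping.keys z \<noteq> {}" by simp
      define N where "N = Max (m ` Poly_Mapping.keys z)"
      have "N \<in> m ` Poly_Mapping.keys z" unfolding N_def by (rule Max_in) (use ne in auto)
      then obtain u where u: "u \<in> Poly_Mapping.keys z" "m u = N" by auto
      have le: "m v \<le> N" if "v \<in> Poly_Mapping.keys z" for v
        unfolding N_def using that by simp
      have "Poly_Mapping.lookup (r v) u = 0" if "v \<in> Poly_Mapping.keys z" for v
      proof (rule ccontr)
        assume "Poly_Mapping.lookup (r v) u \<noteq> 0"
        then have "u \<in> Poly_Mapping.keys (r v)" by (simp add: in_keys_iff)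
        then have "m u < m v" using rk by blast
        then show False using le[OF that] u(2) by simp
      qed
      then have "Poly_Mapping.lookup (lext d z) u = (\<Sum>v\<in>Poly_Mapping.keys z. Poly_Mapping.lookup z v * (if v = u then 1 else 0))"
        unfolding lookup_lext by (intro sum.cong refl) (simp add: dr lookup_add lookup_single when_def)
      also have "\<dots> = Poly_Mapping.lookup z u"
        using u(1) by (simp add: if_distrib[of "\<lambda>t. _ * t"] sum.delta' cong: if_cong)
      finally have "Poly_Mapping.lookup z u = 0" using z0 by simp
      then show False using u(1) by (simp add: in_keys_iff)
    qed
  qed
next
  have dlr: "dl u \<in> range (lext d)" for u
  proof (induction "m u" arbitrary: u rule: less_induct)
    case less
    have "r u \<in> range (lext d)"
      by (rule span_range[OF refl]) (use less rk in blast)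
    then obtain w where w: "lext d w = r u" by auto
    have "lext d (dl u - w) = dl u"
      using w by (simp add: lext_diff dr)
    then show ?case by (metis rangeI)
  qed
  show "surj (lext d)"
    using span_range[OF refl dlr] by blast
qed

lemma tL_bij:
  assumes ch: "character \<phi>"
  shows "bij (tL \<phi>)"
proof -
  define r where "r u = ev (\<lambda>p. if fst p = {#} then 0 else hk \<phi> p) (PF u)" for u
  have dr: "dk \<phi> u = dl u + r u" for u
  proof -
    have "dk \<phi> u = ev (\<lambda>p. if fst p = {#} then dl (snd p) else 0) (PF u) + r u"
      unfolding dk_def r_def
      by (rule ev_plus_cong) (simp add: hk_def char_one[OF ch])
    then show ?thesis using counit_ev'[of "\<lambda>x. dl x" u] by simp
  qed
  have rk: "Poly_Mapping.keys (r u) \<subseteq> {Q. nvF Q < nvF u}" for u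
  proof
    fix Q assume "Q \<in> Poly_Mapping.keys (r u)"
    from subsetD[OF keys_ev this[unfolded r_def]] obtain p where p: "p \<in> Poly_Mapping.keys (PF u)" "Q \<in> Poly_Mapping.keys (if fst p = {#} then 0 else hk \<phi> p)"
      by blast
    then have "fst p \<noteq> {#}" "Q = snd p" by (auto simp: hk_def split: if_splits)
    then show "Q \<in> {Q. nvF Q < nvF u}"
      using keys_PF_less[of "fst p" "snd p" u] p(1) by simp
  qed
  show ?thesis unfolding tL_lext by (rule bij_tri[OF dr rk])
qed



theorem mainTheorem6:
  fixes a \<phi> :: "forest \<Rightarrow> 'k::field_char_0"
  shows "(infinitesimal_character a \<longrightarrow> biderivation (tL a))
       \<and> (character \<phi> \<longrightarrow> hopf_automorphism (tL \<phi>))"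
proof (intro conjI impI)
  assume "infinitesimal_character a"
  then show "biderivation (tL a)"
    unfolding biderivation_def using tL_linear tL_deriv tL_coder by blast
next
  assume ch: "character \<phi>"
  then show "hopf_automorphism (tL \<phi>)"
    unfolding hopf_automorphism_def
    using tL_linear tL_bij tL_one tL_mult tL_cohom tL_eps by blast
qed




end
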